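(* Let $G_1=(V,D_1,B_1)$ and $G_2=(V,D_2,B_2)$ be two simple mixed graphs on the same vertex set with the same skeleton and the same collider triples. Then $\overline{\mathcal{M}_{G_1}}=\overline{\mathcal{M}_{G_2}}$, i.e., $G_1$ and $G_2$ are distributionally equivalent up to closure.
   Context: A mixed graph with finite vertex set $V$ is a triple $G=(V,D,B)$, where $D$ is a set of ordered pairs $(i,j)$, $i\neq j$ (directed edges $i\to j$, with head $j$) and $B$ a set of unordered pairs $\{i,j\}$, $i\neq j$ (bidirected edges $i\leftrightarrow j$, both endpoints are called heads). $G$ is simple if any two distinct nodes are joined by at most one edge of any type. The skeleton of $G$ is the undirected graph obtained by replacing all edges by undirected edges. A collider triple is a triple of vertices $(i,j,k)$ such that there is an edge between $i$ and $j$ and an edge between $j$ and $k$, with $j$ a head of both edges (i.e. $i\to j\leftarrow k$, $i\leftrightarrow j\leftarrow k$, $i\to j\leftrightarrow k$, or $i\leftrightarrow j\leftrightarrow k$), regardless of whether $i$ and $k$ are adjacent. $\mathbb{R}^D_{\mathrm{reg}}$ is the set of real $V\times V$ matrices $\Lambda$ with $\lambda_{ij}=0$ for $(i,j)\notin D$ and $I-\Lambda$ invertible; $\mathit{PD}(B)$ is the set of positive definite $V\times V$ matrices $\Omega$ with $\omega_{ij}=0$ for $i\ne j$, $\{i,j\}\notin B$. $\mathcal{M}_G=\{(I-\Lambda)^{-T}\Omega(I-\Lambda)^{-1}:\Lambda\in\mathbb{R}^D_{\mathrm{reg}},\Omega\in\mathit{PD}(B)\}$, and $\overline{\mathcal{M}_G}$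 denotes its closure in the Euclidean topology. *)

theory Defs
  imports "HOL-Analysis.Analysis"
begin

text \<open>Mixed graph on the finite vertex type 'n: directed edges D (ordered pairs (i,j) = i -> j)
  and bidirected edges B (unordered pairs, represented as two-element sets {i,j}).\<close>

definition mixed_graph :: "('n \<times> 'n) set \<Rightarrow> 'n set set \<Rightarrow> bool" where
  "mixed_graph D B \<longleftrightarrow> (\<forall>(i,j)\<in>D. i \<noteq> j) \<and> (\<forall>e\<in>B. \<exists>i j. i \<noteq> j \<and> e = {i,j})"

definition simple_mixed_graph :: "('n \<times> 'n) set \<Rightarrow> 'n set set \<Rightarrow> bool" where
  "simple_mixed_graph D B \<longleftrightarrow> mixed_graph D B \<and>
     (\<forall>i j. i \<noteq> j \<longrightarrow>
        \<not> ((i,j) \<in> D \<and> (j,i) \<in> D) \<and>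
        \<not> ((i,j) \<in> D \<and> {i,j} \<in> B) \<and>
        \<not> ((j,i) \<in> D \<and> {i,j} \<in> B))"

definition skeleton :: "('n \<times> 'n) set \<Rightarrow> 'n set set \<Rightarrow> 'n set set" where
  "skeleton D B = {{i,j} | i j. (i,j) \<in> D} \<union> B"

definition head_edge :: "('n \<times> 'n) set \<Rightarrow> 'n set set \<Rightarrow> 'n \<Rightarrow> 'n \<Rightarrow> bool" where
  "head_edge D B i j \<longleftrightarrow> (i,j) \<in> D \<or> {i,j} \<in> B"

text \<open>Collider triples (i,j,k), i,j,k a triple of (distinct) vertices, i and k possibly adjacent.\<close>
definition colliders :: "('n \<times> 'n) set \<Rightarrow> 'n set set \<Rightarrow> ('n \<times> 'n \<times> 'n) set" where
  "colliders D B = {(i,j,k). i \<noteq> k \<and> head_edge D B i j \<and> head_edge D B k j}"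

definition RD_reg :: "('n::finite \<times> 'n) set \<Rightarrow> (real^'n^'n) set" where
  "RD_reg D = {\<Lambda>. (\<forall>i j. (i,j) \<notin> D \<longrightarrow> \<Lambda> $ i $ j = 0) \<and> invertible (mat 1 - \<Lambda>)}"

definition pos_def_matrix :: "real^'n^'n \<Rightarrow> bool" where
  "pos_def_matrix M \<longleftrightarrow> transpose M = M \<and> (\<forall>x. x \<noteq> 0 \<longrightarrow> x \<bullet> (M *v x) > 0)"

definition PD :: "'n::finite set set \<Rightarrow> (real^'n^'n) set" where
  "PD B = {\<Omega>. pos_def_matrix \<Omega> \<and> (\<forall>i j. i \<noteq> j \<and> {i,j} \<notin> B \<longrightarrow> \<Omega> $ i $ j = 0)}"

definition model :: "('n::finite \<times> 'n) set \<Rightarrow> 'n set set \<Rightarrow> (real^'n^'n) set" where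
  "model D B = {transpose (matrix_inv (mat 1 - \<Lambda>)) ** \<Omega> ** matrix_inv (mat 1 - \<Lambda>)
                 | \<Lambda> \<Omega>. \<Lambda> \<in> RD_reg D \<and> \<Omega> \<in> PD B}"

end

theory Submission
  imports Defs
begin


lemma minv:
  fixes A :: "real^'n^'n"
  assumes "invertible A"
  shows "A ** matrix_inv A = mat 1" "matrix_inv A ** A = mat 1"
  using someI_ex[OF assms[unfolded invertible_def]] unfolding matrix_inv_def by auto

lemma minv_mult:
  fixes A E :: "real^'n^'n"
  assumes "invertible A" "invertible E"
  shows "matrix_inv (A ** E) = matrix_inv E ** matrix_inv A"
proof -
  have i: "invertible (A ** E)" using assms invertible_mult by blast
  have "matrix_inv (A ** E) = matrix_inv (A ** E) ** ((A ** E) ** (matrix_inv E ** matrix_inv A))"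
  proof -
    have "(A ** E) ** (matrix_inv E ** matrix_inv A) = mat 1"
      by (metis assms matrix_mul_assoc matrix_mul_rid minv(1))
    then show ?thesis by simp
  qed
  also have "\<dots> = matrix_inv E ** matrix_inv A"
    by (metis i matrix_mul_assoc matrix_mul_lid minv(2))
  finally show ?thesis .
qed

definition Sig :: "real^'n^'n \<Rightarrow> real^'n^'n \<Rightarrow> real^'n^'n" where
  "Sig \<Lambda> \<Omega> = transpose (matrix_inv (mat 1 - \<Lambda>)) ** \<Omega> ** matrix_inv (mat 1 - \<Lambda>)"

lemma transform:
  fixes \<Lambda> \<Lambda>' \<Omega> E :: "real^'n^'n"
  assumes A: "invertible (mat 1 - \<Lambda>)" and E: "invertible E"
    and L: "\<Lambda>' = mat 1 - (mat 1 - \<Lambda>) ** E"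
  shows "Sig \<Lambda>' (transpose E ** \<Omega> ** E) = Sig \<Lambda> \<Omega>"
    "invertible (mat 1 - \<Lambda>')"
    "pos_def_matrix \<Omega> \<Longrightarrow> pos_def_matrix (transpose E ** \<Omega> ** E)"
proof -
  have L': "mat 1 - \<Lambda>' = (mat 1 - \<Lambda>) ** E" using L by simp
  show "invertible (mat 1 - \<Lambda>')" unfolding L' using A E invertible_mult by blast
  have tE: "transpose (matrix_inv E) ** transpose E = mat 1"
    by (metis E matrix_transpose_mul minv(1) transpose_mat)
  have "Sig \<Lambda>' (transpose E ** \<Omega> ** E) =
     transpose (matrix_inv (mat 1 - \<Lambda>)) ** (transpose (matrix_inv E) ** transpose E) ** \<Omega> ** (E ** matrix_inv E) ** matrix_inv (mat 1 - \<Lambda>)"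
    unfolding Sig_def L' minv_mult[OF A E] matrix_transpose_mul
    by (simp add: matrix_mul_assoc)
  also have "\<dots> = Sig \<Lambda> \<Omega>" unfolding tE minv(1)[OF E] Sig_def by simp
  finally show "Sig \<Lambda>' (transpose E ** \<Omega> ** E) = Sig \<Lambda> \<Omega>" .
  assume P: "pos_def_matrix \<Omega>"
  show "pos_def_matrix (transpose E ** \<Omega> ** E)"
    unfolding pos_def_matrix_def
  proof safe
    show "transpose (transpose E ** \<Omega> ** E) = transpose E ** \<Omega> ** E"
      using P unfolding pos_def_matrix_def by (simp add: matrix_transpose_mul matrix_mul_assoc)
  next
    fix x :: "real^'n" assume "x \<noteq> 0"
    then have "E *v x \<noteq> 0" using E inj_matrix_vector_mult
      by (metis injD matrix_vector_mult_0_right)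
    then have "(E *v x) \<bullet> (\<Omega> *v (E *v x)) > 0" using P unfolding pos_def_matrix_def by blast
    moreover have "x \<bullet> ((transpose E ** \<Omega> ** E) *v x) = (E *v x) \<bullet> (\<Omega> *v (E *v x))"
      by (simp add: matrix_vector_mul_assoc[symmetric]) (metis dot_lmul_matrix inner_commute)
    ultimately show "x \<bullet> ((transpose E ** \<Omega> ** E) *v x) > 0" by simp
  qed
qed



definition Et :: "'n \<Rightarrow> 'n \<Rightarrow> real \<Rightarrow> real^'n^'n" where
  "Et p j t = (\<chi> a b. (if a = b then 1 else 0) + (if a = p \<and> b = j then t else 0))"

lemma mult_ifr: "(x::real) * (if P then y else 0) = (if P then x*y else 0)" by simp
lemma mult_ifl: "(if P then y else 0) * (x::real) = (if P then y*x else 0)" by simp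

lemma mult_Et: "(X ** Et p j t)$a$b = X$a$b + (if b = j then t * X$a$p else 0)"
  by (cases "b = j") (simp_all add: Et_def matrix_matrix_mult_def distrib_left sum.distrib mult_ifr sum.delta sum.delta' mult.commute)

lemma Et_mult: "(Et p j t ** X)$a$b = X$a$b + (if a = p then t * X$j$b else 0)"
  by (cases "a = p") (simp_all add: Et_def matrix_matrix_mult_def distrib_right sum.distrib mult_ifl sum.delta sum.delta')

lemma tEt: "transpose (Et p j t) = Et j p t"
  by (simp add: Et_def transpose_def vec_eq_iff)

lemma Et_inv: assumes "p \<noteq> j" shows "Et p j t ** Et p j (-t) = mat 1"
  using assms by (simp add: mult_Et vec_eq_iff mat_def) (auto simp: Et_def)

lemma Et_invertible: "p \<noteq> j \<Longrightarrow> invertible (Et p j t)"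
  using Et_inv invertible_right_inverse by blast

lemma Et_O: "(transpose (Et p j t) ** \<Omega> ** Et p j t)$a$b = \<Omega>$a$b + (if a = j then t * \<Omega>$p$b else 0)
   + (if b = j then t * \<Omega>$a$p else 0) + (if a = j \<and> b = j then t*t*\<Omega>$p$p else 0)"
  by (simp add: tEt mult_Et Et_mult algebra_simps)



definition Dof :: "('n \<Rightarrow> 'n \<Rightarrow> bool) \<Rightarrow> ('n \<times> 'n) set" where
  "Dof h = {(i,v). h i v \<and> \<not> h v i}"
definition Bof :: "('n \<Rightarrow> 'n \<Rightarrow> bool) \<Rightarrow> 'n set set" where
  "Bof h = {{i,v} | i v. h i v \<and> h v i}"

lemma in_Bof: "{a,b} \<in> Bof h \<longleftrightarrow> h a b \<and> h b a"
  unfolding Bof_def by (auto simp: doubleton_eq_iff)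

lemma RD_reg_Dof: "\<Lambda> \<in> RD_reg (Dof h) \<longleftrightarrow>
   (\<forall>a b. \<not> (h a b \<and> \<not> h b a) \<longrightarrow> \<Lambda>$a$b = 0) \<and> invertible (mat 1 - \<Lambda>)"
  unfolding RD_reg_def Dof_def by auto

lemma PD_Bof: "\<Omega> \<in> PD (Bof h) \<longleftrightarrow>
   pos_def_matrix \<Omega> \<and> (\<forall>a b. a \<noteq> b \<and> \<not> (h a b \<and> h b a) \<longrightarrow> \<Omega>$a$b = 0)"
  unfolding PD_def in_Bof by auto

definition Mh :: "('n::finite \<Rightarrow> 'n \<Rightarrow> bool) \<Rightarrow> (real^'n^'n) set" where
  "Mh h = model (Dof h) (Bof h)"

lemma Mh_iff: "S \<in> Mh h \<longleftrightarrow> (\<exists>\<Lambda> \<Omega>. S = Sig \<Lambda> \<Omega> \<and> \<Lambda> \<in> RD_reg (Dof h) \<and> \<Omega> \<in> PD (Bof h))"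
  unfolding Mh_def model_def Sig_def by auto

lemma pd_diag: "pos_def_matrix \<Omega> \<Longrightarrow> \<Omega>$p$p > 0"
proof -
  assume P: "pos_def_matrix \<Omega>"
  have "axis p (1::real) \<noteq> 0" by (simp add: axis_eq_0_iff)
  then have "axis p 1 \<bullet> (\<Omega> *v axis p 1) > 0" using P unfolding pos_def_matrix_def by blast
  moreover have "axis p 1 \<bullet> (\<Omega> *v axis p 1) = \<Omega>$p$p"
    by (simp add: inner_vec_def matrix_vector_mult_def axis_def mult_ifr mult_ifl sum.delta sum.delta' cong: if_cong)
  ultimately show ?thesis by simp
qed

lemma pd_sym: "pos_def_matrix \<Omega> \<Longrightarrow> \<Omega>$a$b = \<Omega>$b$a"
proof -
  assume "pos_def_matrix \<Omega>"
  then have "\<Omega> = transpose \<Omega>" unfolding pos_def_matrix_def by simp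
  then have "\<Omega>$a$b = (transpose \<Omega>)$a$b" by simp
  then show ?thesis by (simp add: transpose_def)
qed

lemma toggle_dir:
  fixes h h' :: "'n::finite \<Rightarrow> 'n \<Rightarrow> bool"
  assumes pj: "p \<noteq> j" and noh: "\<And>a. \<Lambda>$a$p = 0"
    and L: "\<Lambda> \<in> RD_reg (Dof h)" and O: "\<Omega> \<in> PD (Bof h)"
    and Lpat: "\<And>a b. \<not> (h' a b \<and> \<not> h' b a) \<Longrightarrow> \<Lambda>$a$b - (if a = p \<and> b = j then t else 0) = 0"
    and Opat: "\<And>a b. a \<noteq> b \<Longrightarrow> \<not> (h' a b \<and> h' b a) \<Longrightarrow>
        \<Omega>$a$b + (if a = j then t * \<Omega>$p$b else 0)
   + (if b = j then t * \<Omega>$a$p else 0) + (if a = j \<and> b = j then t*t*\<Omega>$p$p else 0) = 0"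
  shows "Sig \<Lambda> \<Omega> \<in> Mh h'"
proof -
  let ?E = "Et p j t"
  define \<Lambda>' where "\<Lambda>' = mat 1 - (mat 1 - \<Lambda>) ** ?E"
  have inv: "invertible (mat 1 - \<Lambda>)" using L unfolding RD_reg_Dof by blast
  have pd: "pos_def_matrix \<Omega>" using O unfolding PD_Bof by blast
  note T = transform[OF inv Et_invertible[OF pj] \<Lambda>'_def]
  have Lent: "\<Lambda>'$a$b = \<Lambda>$a$b - (if a = p \<and> b = j then t else 0)" for a b
    unfolding \<Lambda>'_def by (simp add: mult_Et noh mat_def)
  have "\<Lambda>' \<in> RD_reg (Dof h')" unfolding RD_reg_Dof using T(2) Lent Lpat by auto
  moreover have "transpose ?E ** \<Omega> ** ?E \<in> PD (Bof h')"
    unfolding PD_Bof using T(3)[OF pd] Opat by (simp add: Et_O)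
  ultimately show ?thesis unfolding Mh_iff using T(1) by metis
qed

lemma toggle:
  fixes h :: "'n::finite \<Rightarrow> 'n \<Rightarrow> bool"
  assumes pj: "p \<noteq> j" and hpj: "h p j" and noh: "\<And>i. i \<noteq> j \<Longrightarrow> \<not> h i p"
  shows "Mh (\<lambda>i v. if i = j \<and> v = p then True else h i v) = Mh (\<lambda>i v. if i = j \<and> v = p then False else h i v)"
    (is "Mh ?T = Mh ?F")
proof
  show "Mh ?F \<subseteq> Mh ?T"
  proof
    fix S assume "S \<in> Mh ?F"
    then obtain \<Lambda> \<Omega> where S: "S = Sig \<Lambda> \<Omega>" and L: "\<Lambda> \<in> RD_reg (Dof ?F)" and O: "\<Omega> \<in> PD (Bof ?F)"
      unfolding Mh_iff by blast
    have noL: "\<Lambda>$a$p = 0" for a using L noh unfolding RD_reg_Dof by auto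
    have Lz: "\<not> (?F a b \<and> \<not> ?F b a) \<Longrightarrow> \<Lambda>$a$b = 0" for a b using L unfolding RD_reg_Dof by blast
    have Oz: "a \<noteq> b \<Longrightarrow> \<not> (?F a b \<and> ?F b a) \<Longrightarrow> \<Omega>$a$b = 0" for a b using O unfolding PD_Bof by blast
    show "S \<in> Mh ?T" unfolding S
    proof (rule toggle_dir[OF pj noL L O, where t = "\<Lambda>$p$j"])
      fix a b assume "\<not> (?T a b \<and> \<not> ?T b a)"
      then show "\<Lambda>$a$b - (if a = p \<and> b = j then \<Lambda>$p$j else 0) = 0"
        using Lz[of a b] pj by (auto split: if_splits)
    next
      fix a b assume ab: "a \<noteq> b" "\<not> (?T a b \<and> ?T b a)"
      have "\<Omega>$a$b = 0" using Oz[of a b] ab by (auto split: if_splits)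
      moreover have "a = j \<Longrightarrow> \<Omega>$p$b = 0" using Oz[of p b] ab noh pj hpj by (auto split: if_splits)
      moreover have "b = j \<Longrightarrow> \<Omega>$a$p = 0" using Oz[of a p] ab noh pj hpj by (auto split: if_splits)
      ultimately show "\<Omega>$a$b + (if a = j then \<Lambda>$p$j * \<Omega>$p$b else 0)
        + (if b = j then \<Lambda>$p$j * \<Omega>$a$p else 0) + (if a = j \<and> b = j then \<Lambda>$p$j*\<Lambda>$p$j*\<Omega>$p$p else 0) = 0"
        using ab by auto
    qed
  qed
next
  show "Mh ?T \<subseteq> Mh ?F"
  proof
    fix S assume "S \<in> Mh ?T"
    then obtain \<Lambda> \<Omega> where S: "S = Sig \<Lambda> \<Omega>" and L: "\<Lambda> \<in> RD_reg (Dof ?T)" and O: "\<Omega> \<in> PD (Bof ?T)"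
      unfolding Mh_iff by blast
    have noL: "\<Lambda>$a$p = 0" for a using L noh hpj unfolding RD_reg_Dof by auto
    have Lz: "\<not> (?T a b \<and> \<not> ?T b a) \<Longrightarrow> \<Lambda>$a$b = 0" for a b using L unfolding RD_reg_Dof by blast
    have Oz: "a \<noteq> b \<Longrightarrow> \<not> (?T a b \<and> ?T b a) \<Longrightarrow> \<Omega>$a$b = 0" for a b using O unfolding PD_Bof by blast
    have pd: "pos_def_matrix \<Omega>" using O unfolding PD_Bof by blast
    have pp: "\<Omega>$p$p > 0" using pd_diag[OF pd] .
    define t where "t = - \<Omega>$j$p / \<Omega>$p$p"
    have tt: "\<Omega>$j$p + t * \<Omega>$p$p = 0" using pp unfolding t_def by simp
    show "S \<in> Mh ?F" unfolding S
    proof (rule toggle_dir[OF pj noL L O, where t = t])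
      fix a b assume "\<not> (?F a b \<and> \<not> ?F b a)"
      then show "\<Lambda>$a$b - (if a = p \<and> b = j then t else 0) = 0"
        using Lz[of a b] pj hpj by (auto split: if_splits)
    next
      fix a b assume ab: "a \<noteq> b" "\<not> (?F a b \<and> ?F b a)"
      show "\<Omega>$a$b + (if a = j then t * \<Omega>$p$b else 0)
        + (if b = j then t * \<Omega>$a$p else 0) + (if a = j \<and> b = j then t*t*\<Omega>$p$p else 0) = 0"
      proof (cases "(a = j \<and> b = p) \<or> (a = p \<and> b = j)")
        case True
        then show ?thesis
        proof
          assume "a = j \<and> b = p" then show ?thesis using tt pj by simp
        next
          assume "a = p \<and> b = j" then show ?thesis using tt pj pd_sym[OF pd, of j p] by simp
        qed
      next
        case False
        have e1: "?T a b = ?F a b" "?T b a = ?F b a" using False by auto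
        have "\<Omega>$a$b = 0" using Oz[of a b] ab e1 by simp
        moreover have "\<Omega>$p$b = 0" if "a = j"
        proof -
          have "b \<noteq> j" "b \<noteq> p" using that ab False by auto
          then have "\<not> ?T b p" using noh by simp
          then show ?thesis using Oz[of p b] \<open>b \<noteq> p\<close> by auto
        qed
        moreover have "\<Omega>$a$p = 0" if "b = j"
        proof -
          have "a \<noteq> j" "a \<noteq> p" using that ab False by auto
          then have "\<not> ?T a p" using noh by simp
          then show ?thesis using Oz[of a p] \<open>a \<noteq> p\<close> by auto
        qed
        ultimately show ?thesis using ab by auto
      qed
    qed
  qed
qed



lemma sum_single: "(\<And>k. k \<noteq> k0 \<Longrightarrow> g k = 0) \<Longrightarrow> (\<Sum>k\<in>(UNIV::'n::finite set). g k) = (g k0 :: real)"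
  by (subst sum.remove[of UNIV k0]) (auto intro: sum.neutral)

locale cyc =
  fixes h :: "'n::finite \<Rightarrow> 'n \<Rightarrow> bool" and S :: "'n set" and par :: "'n \<Rightarrow> 'n"
  assumes bij: "bij_betw par S S"
    and hp: "\<And>v. v \<in> S \<Longrightarrow> h (par v) v"
    and nh: "\<And>v. v \<in> S \<Longrightarrow> \<not> h v (par v)"
    and un: "\<And>v i. v \<in> S \<Longrightarrow> h i v \<Longrightarrow> i = par v"
begin

definition h' where "h' = (\<lambda>i x. if x \<in> S then i \<in> S \<and> par i = x else h i x)"

lemma par_S: "v \<in> S \<Longrightarrow> par v \<in> S" using bij bij_betwE by blast
lemma par_inj: "v \<in> S \<Longrightarrow> w \<in> S \<Longrightarrow> par v = par w \<Longrightarrow> v = w"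
  using bij unfolding bij_betw_def inj_on_def by blast
lemma par_surj: "b \<in> S \<Longrightarrow> \<exists>k\<in>S. par k = b"
  using bij unfolding bij_betw_def by (metis imageE)
lemma par_ne: "v \<in> S \<Longrightarrow> par v \<noteq> v" using hp nh by fastforce
lemma par_par: "v \<in> S \<Longrightarrow> par (par v) \<noteq> v" using hp nh par_S by metis

context
  fixes \<Lambda> \<Omega> :: "real^'n^'n"
  assumes L: "\<Lambda> \<in> RD_reg (Dof h)" and O: "\<Omega> \<in> PD (Bof h)"
    and nz: "\<And>v. v \<in> S \<Longrightarrow> \<Lambda>$(par v)$v \<noteq> 0"
begin

lemma Lz: "\<not> (h a b \<and> \<not> h b a) \<Longrightarrow> \<Lambda>$a$b = 0" using L unfolding RD_reg_Dof by blast
lemma Oz: "a \<noteq> b \<Longrightarrow> \<not> (h a b \<and> h b a) \<Longrightarrow> \<Omega>$a$b = 0" using O unfolding PD_Bof by blast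

lemma LS: "k \<in> S \<Longrightarrow> a \<noteq> par k \<Longrightarrow> \<Lambda>$a$k = 0"
  using Lz un by blast
lemma OS: "k \<in> S \<Longrightarrow> l \<noteq> k \<Longrightarrow> \<Omega>$k$l = 0"
  using Oz un nh by metis

definition E :: "real^'n^'n" where
  "E = (\<chi> a b. if b \<in> S then (if a \<in> S \<and> par a = b then -1/\<Lambda>$b$a else 0) else (if a = b then 1 else 0))"
definition F :: "real^'n^'n" where
  "F = (\<chi> a b. if b \<in> S then (if a = par b then -\<Lambda>$a$b else 0) else (if a = b then 1 else 0))"

lemma EF: "E ** F = mat 1"
proof -
  have "(E ** F)$a$b = (if a = b then 1 else 0)" for a b
  proof (cases "b \<in> S")
    case True
    have "(E ** F)$a$b = E$a$(par b) * F$(par b)$b"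
      unfolding matrix_matrix_mult_def using True
      by (simp, intro sum_single) (auto simp: F_def)
    also have "\<dots> = (if a = b then 1 else 0)"
      using True par_S[OF True] nz[OF True] par_inj[of a b] by (auto simp: E_def F_def)
    finally show ?thesis .
  next
    case False
    have "(E ** F)$a$b = E$a$b * F$b$b"
      unfolding matrix_matrix_mult_def using False
      by (simp, intro sum_single) (auto simp: F_def)
    then show ?thesis using False by (simp add: E_def F_def)
  qed
  then show ?thesis by (simp add: vec_eq_iff mat_def)
qed

lemma E_inv: "invertible E" using EF invertible_right_inverse by blast

definition L' where "L' = mat 1 - (mat 1 - \<Lambda>) ** E"

lemma L'_ent: "\<not> (h' a b \<and> \<not> h' b a) \<Longrightarrow> L'$a$b = 0"
proof (cases "b \<in> S")
  case True
  assume pat: "\<not> (h' a b \<and> \<not> h' b a)"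
  obtain k0 where k0: "k0 \<in> S" "par k0 = b" using par_surj[OF True] by blast
  have "((mat 1 - \<Lambda>) ** E)$a$b = (mat 1 - \<Lambda>)$a$k0 * E$k0$b"
    unfolding matrix_matrix_mult_def using True
    by (simp, intro sum_single) (auto simp: E_def k0 par_inj)
  also have "\<dots> = ((if a = k0 then 1 else 0) - \<Lambda>$a$k0) * (-1/\<Lambda>$b$k0)"
    using k0 True by (simp add: E_def mat_def)
  finally have eq: "L'$a$b = (if a = b then 1 else 0) - ((if a = k0 then 1 else 0) - \<Lambda>$a$k0) * (-1/\<Lambda>$b$k0)"
    unfolding L'_def by (simp add: mat_def)
  have nzb: "\<Lambda>$b$k0 \<noteq> 0" using nz[OF k0(1)] k0 by simp
  show ?thesis
  proof (cases "a = b")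
    case True
    have "k0 \<noteq> b" using par_ne[OF k0(1)] k0 by auto
    then show ?thesis using eq True nzb by simp
  next
    case False
    have "\<Lambda>$a$k0 = 0" using LS[OF k0(1)] False k0 by auto
    moreover have "a \<noteq> k0"
    proof
      assume "a = k0"
      then have "h' a b" using k0 True by (simp add: h'_def)
      moreover have "\<not> h' b a" using \<open>a = k0\<close> k0 par_par[OF k0(1)] True by (simp add: h'_def)
      ultimately show False using pat by blast
    qed
    ultimately show ?thesis using eq False by simp
  qed
next
  case False
  assume pat: "\<not> (h' a b \<and> \<not> h' b a)"
  have "((mat 1 - \<Lambda>) ** E)$a$b = (mat 1 - \<Lambda>)$a$b * E$b$b"
    unfolding matrix_matrix_mult_def using False
    by (simp, intro sum_single) (auto simp: E_def)
  then have eq: "L'$a$b = \<Lambda>$a$b" using False unfolding L'_def by (simp add: E_def mat_def)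
  have "\<not> (h a b \<and> \<not> h b a)"
    using pat False by (cases "a \<in> S") (auto simp: h'_def)
  then show ?thesis using eq Lz by simp
qed

lemma O'_ent: "a \<noteq> b \<Longrightarrow> \<not> (h' a b \<and> h' b a) \<Longrightarrow> (transpose E ** \<Omega> ** E)$a$b = 0"
proof -
  assume ab: "a \<noteq> b" and pat: "\<not> (h' a b \<and> h' b a)"
  have "(transpose E ** \<Omega> ** E)$a$b = (\<Sum>l\<in>UNIV. (\<Sum>k\<in>UNIV. E$k$a * \<Omega>$k$l) * E$l$b)"
    by (simp add: matrix_matrix_mult_def transpose_def)
  also have "\<dots> = (\<Sum>l\<in>UNIV. (\<Sum>k\<in>UNIV. E$k$a * \<Omega>$k$l * E$l$b))"
    by (simp add: sum_distrib_right)
  also have "\<dots> = 0"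
  proof (intro sum.neutral ballI)
    fix l k
    have Ea: "E$k$a \<noteq> 0 \<Longrightarrow> (a \<in> S \<and> k \<in> S \<and> par k = a) \<or> (a \<notin> S \<and> k = a)" for k a
      by (auto simp: E_def split: if_splits)
    show "E$k$a * \<Omega>$k$l * E$l$b = 0"
    proof (rule ccontr)
      assume "E$k$a * \<Omega>$k$l * E$l$b \<noteq> 0"
      then have 1: "E$k$a \<noteq> 0" and 2: "\<Omega>$k$l \<noteq> 0" and 3: "E$l$b \<noteq> 0" by auto
      show False
      proof (cases "k = l")
        case True
        then show False using Ea[OF 1] Ea[OF 3] ab by auto
      next
        case False
        have "k \<notin> S" using OS[of k l] 2 False by auto
        moreover have "l \<notin> S" using OS[of l k] 2 False pd_sym[of \<Omega> k l] O unfolding PD_Bof by auto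
        ultimately have "a = k" "b = l" "a \<notin> S" "b \<notin> S" using Ea[OF 1] Ea[OF 3] by auto
        moreover have "h k l \<and> h l k" using Oz 2 False by blast
        ultimately show False using pat by (simp add: h'_def)
      qed
    qed
  qed
  finally show ?thesis .
qed

lemma exact: "Sig \<Lambda> \<Omega> \<in> Mh h'"
proof -
  have inv: "invertible (mat 1 - \<Lambda>)" using L unfolding RD_reg_Dof by blast
  have pd: "pos_def_matrix \<Omega>" using O unfolding PD_Bof by blast
  note T = transform[OF inv E_inv L'_def]
  have "L' \<in> RD_reg (Dof h')" unfolding RD_reg_Dof using T(2) L'_ent by blast
  moreover have "transpose E ** \<Omega> ** E \<in> PD (Bof h')"
    unfolding PD_Bof using T(3)[OF pd] O'_ent by blast
  ultimately show ?thesis unfolding Mh_iff using T(1) by metis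
qed

end
end



lemma tendsto_det:
  fixes M :: "'a \<Rightarrow> real^'n^'n"
  assumes "(M \<longlongrightarrow> A) F"
  shows "((\<lambda>x. det (M x)) \<longlongrightarrow> det A) F"
  unfolding det_def
  by (intro tendsto_intros tendsto_vec_nth assms)

lemma tendsto_mmult:
  fixes X Y :: "'a \<Rightarrow> real^'n^'n"
  assumes "(X \<longlongrightarrow> X0) F" "(Y \<longlongrightarrow> Y0) F"
  shows "((\<lambda>x. X x ** Y x) \<longlongrightarrow> X0 ** Y0) F"
  unfolding matrix_matrix_mult_def
  by (intro tendsto_intros tendsto_vec_nth assms)

lemma tendsto_transpose:
  fixes X :: "'a \<Rightarrow> real^'n^'n"
  assumes "(X \<longlongrightarrow> X0) F"
  shows "((\<lambda>x. transpose (X x)) \<longlongrightarrow> transpose X0) F"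
  unfolding transpose_def
  by (intro tendsto_intros tendsto_vec_nth assms)

definition cram :: "real^'n^'n \<Rightarrow> 'n \<Rightarrow> 'n \<Rightarrow> real^'n^'n" where
  "cram M k j = (\<chi> r c. if c = k then (if r = j then 1 else 0) else M$r$c)"

lemma inv_formula:
  fixes M :: "real^'n^'n"
  assumes d: "det M \<noteq> 0"
  shows "matrix_inv M $ k $ j = det (cram M k j) / det M"
proof -
  have i: "invertible M" using d invertible_det_nz by blast
  have "M *v (matrix_inv M *v axis j 1) = axis j 1"
    by (simp add: matrix_vector_mul_assoc minv(1)[OF i])
  then have "matrix_inv M *v axis j 1 = (\<chi> k. det(\<chi> r c. if c=k then (axis j 1::real^'n)$r else M$r$c) / det M)"
    using cramer[OF d] by blast
  then have "(matrix_inv M *v axis j 1) $ k = det(\<chi> r c. if c=k then (axis j 1::real^'n)$r else M$r$c) / det M"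
    by simp
  moreover have "(matrix_inv M *v axis j 1) $ k = matrix_inv M $ k $ j"
    by (simp add: matrix_vector_mult_def axis_def mult_ifr sum.delta' cong: if_cong)
  moreover have "(\<chi> r c. if c=k then (axis j 1::real^'n)$r else M$r$c) = cram M k j"
    by (simp add: cram_def axis_def vec_eq_iff)
  ultimately show ?thesis by simp
qed

lemma tendsto_cram:
  fixes M :: "'a \<Rightarrow> real^'n^'n"
  assumes "(M \<longlongrightarrow> A) F"
  shows "((\<lambda>x. cram (M x) k j) \<longlongrightarrow> cram A k j) F"
proof (rule vec_tendstoI, rule vec_tendstoI)
  fix r c
  show "((\<lambda>x. cram (M x) k j $ r $ c) \<longlongrightarrow> cram A k j $ r $ c) F"
    by (cases "c = k") (simp_all add: cram_def tendsto_vec_nth assms)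
qed

lemma tendsto_minv:
  fixes M :: "'a \<Rightarrow> real^'n^'n"
  assumes M: "(M \<longlongrightarrow> A) F" and i: "invertible A"
  shows "((\<lambda>x. matrix_inv (M x)) \<longlongrightarrow> matrix_inv A) F"
proof -
  have dA: "det A \<noteq> 0" using i invertible_det_nz by blast
  have ev: "eventually (\<lambda>x. det (M x) \<noteq> 0) F"
    using tendsto_imp_eventually_ne[OF tendsto_det[OF M] dA] .
  show ?thesis
  proof (rule vec_tendstoI, rule vec_tendstoI)
    fix k j
    have "((\<lambda>x. det (cram (M x) k j) / det (M x)) \<longlongrightarrow> det (cram A k j) / det A) F"
      by (intro tendsto_divide tendsto_det tendsto_cram M dA)
    then have "((\<lambda>x. det (cram (M x) k j) / det (M x)) \<longlongrightarrow> matrix_inv A $ k $ j) F"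
      using inv_formula[OF dA] by simp
    then show "((\<lambda>x. matrix_inv (M x) $ k $ j) \<longlongrightarrow> matrix_inv A $ k $ j) F"
    proof (rule Lim_transform_eventually)
      show "\<forall>\<^sub>F x in F. det (cram (M x) k j) / det (M x) = matrix_inv (M x) $ k $ j"
        using ev by eventually_elim (simp add: inv_formula)
    qed
  qed
qed

lemma tendsto_Sig:
  fixes L :: "'a \<Rightarrow> real^'n^'n"
  assumes "(L \<longlongrightarrow> L0) F" "invertible (mat 1 - L0)"
  shows "((\<lambda>x. Sig (L x) \<Omega>) \<longlongrightarrow> Sig L0 \<Omega>) F"
proof -
  have m: "((\<lambda>x. mat 1 - L x) \<longlongrightarrow> mat 1 - L0) F" by (intro tendsto_intros assms)
  note mi = tendsto_minv[OF m assms(2)]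
  show ?thesis unfolding Sig_def
    by (intro tendsto_mmult tendsto_transpose mi tendsto_const)
qed

context cyc begin

lemma closure_step:
  assumes L: "\<Lambda> \<in> RD_reg (Dof h)" and O: "\<Omega> \<in> PD (Bof h)"
  shows "Sig \<Lambda> \<Omega> \<in> closure (Mh h')"
proof -
  define N :: "real^'n^'n" where "N = (\<chi> a b. if b \<in> S \<and> a = par b \<and> \<Lambda>$a$b = 0 then 1 else 0)"
  define Le where "Le = (\<lambda>e::real. \<Lambda> + e *\<^sub>R N)"
  have inv: "invertible (mat 1 - \<Lambda>)" using L unfolding RD_reg_Dof by blast
  have tL: "(Le \<longlongrightarrow> \<Lambda>) (at 0)" unfolding Le_def
    by (auto intro!: tendsto_eq_intros)
  have tm: "((\<lambda>e. mat 1 - Le e) \<longlongrightarrow> mat 1 - \<Lambda>) (at 0)" by (intro tendsto_intros tL)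
  have ev1: "eventually (\<lambda>e. det (mat 1 - Le e) \<noteq> 0) (at 0)"
    using tendsto_imp_eventually_ne[OF tendsto_det[OF tm]] inv invertible_det_nz by blast
  have ev2: "eventually (\<lambda>e::real. e \<noteq> 0) (at 0)" by (rule eventually_neq_at_within)
  have "eventually (\<lambda>e. Sig (Le e) \<Omega> \<in> Mh h') (at 0)"
    using ev1 ev2
  proof (eventually_elim)
    case (elim e)
    have "Le e \<in> RD_reg (Dof h)"
      unfolding RD_reg_Dof
    proof (intro conjI allI impI)
      fix a b assume "\<not> (h a b \<and> \<not> h b a)"
      moreover have "\<Lambda>$a$b = 0" using calculation L unfolding RD_reg_Dof by blast
      ultimately show "Le e $ a $ b = 0" using hp nh by (auto simp: Le_def N_def)
    next
      show "invertible (mat 1 - Le e)" using elim invertible_det_nz by blast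
    qed
    moreover have "Le e $ (par v) $ v \<noteq> 0" if "v \<in> S" for v
      using that elim by (auto simp: Le_def N_def)
    ultimately show ?case using exact O by blast
  qed
  moreover have "((\<lambda>e. Sig (Le e) \<Omega>) \<longlongrightarrow> Sig \<Lambda> \<Omega>) (at 0)"
    by (rule tendsto_Sig[OF tL inv])
  ultimately show ?thesis
    by (intro Lim_in_closed_set[of _ _ "at (0::real)"])
       (auto simp: trivial_limit_at elim: eventually_mono intro: closure_subset[THEN subsetD])
qed

lemma model_closure: "closure (Mh h) \<subseteq> closure (Mh h')"
proof -
  have "Mh h \<subseteq> closure (Mh h')"
  proof
    fix X assume "X \<in> Mh h"
    then obtain \<Lambda> \<Omega> where "X = Sig \<Lambda> \<Omega>" "\<Lambda> \<in> RD_reg (Dof h)" "\<Omega> \<in> PD (Bof h)"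
      unfolding Mh_iff by blast
    then show "X \<in> closure (Mh h')" using closure_step by simp
  qed
  then show ?thesis by (simp add: closure_minimal)
qed

end



definition SK :: "('n \<Rightarrow> 'n \<Rightarrow> bool) \<Rightarrow> ('n \<Rightarrow> 'n \<Rightarrow> bool) \<Rightarrow> bool" where
  "SK h g \<longleftrightarrow> (\<forall>i j. (h i j \<or> h j i) = (g i j \<or> g j i))"
definition CO :: "('n \<Rightarrow> 'n \<Rightarrow> bool) \<Rightarrow> ('n \<Rightarrow> 'n \<Rightarrow> bool) \<Rightarrow> bool" where
  "CO h g \<longleftrightarrow> (\<forall>i j k. i \<noteq> k \<longrightarrow> (h i j \<and> h k j) = (g i j \<and> g k j))"
definition irr :: "('n \<Rightarrow> 'n \<Rightarrow> bool) \<Rightarrow> bool" where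
  "irr h \<longleftrightarrow> (\<forall>i. \<not> h i i)"
definition dif :: "('n \<Rightarrow> 'n \<Rightarrow> bool) \<Rightarrow> ('n \<Rightarrow> 'n \<Rightarrow> bool) \<Rightarrow> ('n \<times> 'n) set" where
  "dif h g = {(i,x). h i x \<noteq> g i x}"

lemma SK_sym: "SK h g \<Longrightarrow> SK g h" unfolding SK_def by auto
lemma SK_trans: "SK h g \<Longrightarrow> SK g f \<Longrightarrow> SK h f" unfolding SK_def by auto
lemma CO_sym: "CO h g \<Longrightarrow> CO g h" unfolding CO_def by auto
lemma CO_trans: "CO h g \<Longrightarrow> CO g f \<Longrightarrow> CO h f" unfolding CO_def by auto
lemma dif_sym: "dif h g = dif g h" unfolding dif_def by auto

definition uh :: "('n \<Rightarrow> 'n \<Rightarrow> bool) \<Rightarrow> 'n \<Rightarrow> bool" where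
  "uh h x \<longleftrightarrow> (\<forall>i k. h i x \<and> h k x \<longrightarrow> i = k)"

lemma one_head:
  assumes co: "CO h g" and d: "h i0 x \<noteq> g i0 x"
  shows "uh h x"
proof (rule ccontr)
  assume "\<not> uh h x"
  then obtain i k where ik: "h i x" "h k x" "i \<noteq> k" unfolding uh_def by blast
  have gik: "g i x" "g k x" using co ik unfolding CO_def by blast+
  have "h l x = g l x" for l
  proof (cases "l = i")
    case True then show ?thesis using ik gik by simp
  next
    case False
    then show ?thesis using co ik gik unfolding CO_def by blast
  qed
  then show False using d by blast
qed

lemma CO_local:
  assumes "\<And>i x. x \<notin> Z \<Longrightarrow> h i x = g i x" "\<And>x. x \<in> Z \<Longrightarrow> uh h x" "\<And>x. x \<in> Z \<Longrightarrow> uh g x"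
  shows "CO h g"
  unfolding CO_def
proof (intro allI impI)
  fix i j k :: 'a assume "i \<noteq> k"
  show "(h i j \<and> h k j) = (g i j \<and> g k j)"
  proof (cases "j \<in> Z")
    case True then show ?thesis using assms(2,3) \<open>i \<noteq> k\<close> unfolding uh_def by blast
  next
    case False then show ?thesis using assms(1) by simp
  qed
qed

definition upd :: "('n \<Rightarrow> 'n \<Rightarrow> bool) \<Rightarrow> 'n \<Rightarrow> 'n \<Rightarrow> bool \<Rightarrow> 'n \<Rightarrow> 'n \<Rightarrow> bool" where
  "upd h a b c = (\<lambda>i x. if i = a \<and> x = b then c else h i x)"

lemma upd_same: "h a b = c \<Longrightarrow> upd h a b c = h"
  unfolding upd_def by (intro ext) (metis)

lemma upd_other: "x \<noteq> b \<Longrightarrow> upd h a b c i x = h i x"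
  unfolding upd_def by simp

lemma upd_ab: "upd h a b c a b = c" unfolding upd_def by simp

lemma upd_other': "i \<noteq> a \<Longrightarrow> upd h a b c i x = h i x"
  unfolding upd_def by simp

lemma toggle_upd:
  fixes h :: "'n::finite \<Rightarrow> 'n \<Rightarrow> bool"
  assumes "p \<noteq> j" "h p j" "\<And>i. i \<noteq> j \<Longrightarrow> \<not> h i p"
  shows "Mh (upd h j p True) = Mh (upd h j p False)"
  using toggle[of p j h, OF assms] unfolding upd_def .

lemma SK_upd:
  assumes ab: "a \<noteq> b" and hba: "h b a"
  shows "SK (upd h a b c) h"
  unfolding SK_def
proof (intro allI)
  fix i j
  show "(upd h a b c i j \<or> upd h a b c j i) = (h i j \<or> h j i)"
  proof (cases "i = a \<and> j = b")
    case True then show ?thesis using ab hba by (auto simp: upd_def)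
  next
    case F1: False
    show ?thesis
    proof (cases "j = a \<and> i = b")
      case True then show ?thesis using ab hba by (auto simp: upd_def)
    next
      case False
      then show ?thesis unfolding upd_def by (simp only: if_not_P[OF F1] if_not_P[OF False] if_False)
    qed
  qed
qed

lemma dif_upd:
  assumes "h a b \<noteq> g a b" "c = g a b"
  shows "dif (upd h a b c) g \<subset> dif h g"
proof -
  have "dif (upd h a b c) g \<subseteq> dif h g"
  proof
    fix z assume z: "z \<in> dif (upd h a b c) g"
    obtain i x where zz: "z = (i,x)" by fastforce
    show "z \<in> dif h g"
    proof (cases "i = a \<and> x = b")
      case True then show ?thesis using z zz assms unfolding dif_def upd_def by auto
    next
      case False
      then have "upd h a b c i x = h i x" unfolding upd_def by (simp only: if_not_P[OF False] if_False)
      then show ?thesis using z zz unfolding dif_def by auto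
    qed
  qed
  moreover have "(a,b) \<in> dif h g" "(a,b) \<notin> dif (upd h a b c) g"
    using assms unfolding dif_def by (auto simp: upd_ab)
  ultimately show ?thesis by blast
qed

lemma CO_upd:
  assumes "uh h b" "uh (upd h a b c) b"
  shows "CO (upd h a b c) h"
  by (rule CO_local[of "{b}"]) (use assms in \<open>auto simp: upd_other\<close>)

lemma irr_upd: "irr h \<Longrightarrow> a \<noteq> b \<Longrightarrow> irr (upd h a b c)"
  unfolding irr_def upd_def by auto

lemma step:
  fixes h g :: "'n::finite \<Rightarrow> 'n \<Rightarrow> bool"
  assumes irh: "irr h" and sk: "SK h g" and co: "CO h g"
    and d: "h u0 v \<noteq> g u0 v" and hv: "h u1 v"
  shows "\<exists>hn. irr hn \<and> SK hn h \<and> CO hn h \<and> closure (Mh hn) = closure (Mh h) \<and> dif hn g \<subset> dif h g"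
proof -
  define X where "X = {x. \<exists>i. h i x \<noteq> g i x}"
  have uhX: "x \<in> X \<Longrightarrow> uh h x" for x using one_head[OF co] unfolding X_def by blast
  have ugX: "x \<in> X \<Longrightarrow> uh g x" for x
  proof -
    assume "x \<in> X"
    then obtain i where "h i x \<noteq> g i x" unfolding X_def by blast
    then have "g i x \<noteq> h i x" by metis
    then show ?thesis using one_head[OF CO_sym[OF co], of i x] by blast
  qed
  have ngX: "x \<in> X \<Longrightarrow> h u x \<Longrightarrow> \<not> g u x" for x u
  proof
    assume x: "x \<in> X" and hu: "h u x" and gu: "g u x"
    have "h i x = g i x" for i using uhX[OF x] ugX[OF x] hu gu unfolding uh_def by blast
    then show False using x unfolding X_def by blast
  qed
  show ?thesis
  proof (cases "\<exists>w u. w \<in> X \<and> h u w \<and> h w u")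
    case True
    then obtain w u where w: "w \<in> X" "h u w" "h w u" by blast
    have uw: "u \<noteq> w" using irh w unfolding irr_def by blast
    have nh: "i \<noteq> u \<Longrightarrow> \<not> h i w" for i using uhX[OF w(1)] w(2) unfolding uh_def by blast
    define hn where "hn = upd h u w False"
    have M: "Mh hn = Mh h"
    proof -
      have "upd h u w True = h" using upd_same[of h u w True] w(2) by simp
      then show ?thesis using toggle_upd[of w u h, OF _ w(3) nh] uw unfolding hn_def by metis
    qed
    have "irr hn" using irr_upd[OF irh uw] unfolding hn_def .
    moreover have "SK hn h" unfolding hn_def using SK_upd[of u w h, OF uw w(3)] .
    moreover have "CO hn h" unfolding hn_def
    proof (rule CO_upd)
      show "uh h w" using uhX[OF w(1)] .
      show "uh (upd h u w False) w" unfolding uh_def upd_def using nh by auto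
    qed
    moreover have "dif hn g \<subset> dif h g" unfolding hn_def
      using dif_upd[of h u w g False] ngX[OF w(1) w(2)] w(2) by auto
    ultimately show ?thesis using M by metis
  next
    case nA: False
    show ?thesis
    proof (cases "\<exists>u w. (\<forall>i. \<not> h i u) \<and> h u w \<and> g w u")
      case True
      then obtain u w where uw: "\<forall>i. \<not> h i u" "h u w" "g w u" by blast
      have une: "u \<noteq> w" using irh uw unfolding irr_def by blast
      define hn where "hn = upd h w u True"
      have M: "Mh hn = Mh h"
      proof -
        have "upd h w u False = h" using upd_same[of h w u False] uw(1) by simp
        then show ?thesis using toggle_upd[of u w h, OF une uw(2)] uw(1) unfolding hn_def by metis
      qed
      have "irr hn" using irr_upd[OF irh] une unfolding hn_def by metis
      moreover have "SK hn h" unfolding hn_def using SK_upd[of w u h] une uw(2) by metis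
      moreover have "CO hn h" unfolding hn_def
      proof (rule CO_upd)
        show "uh h u" using uw(1) unfolding uh_def by blast
        show "uh (upd h w u True) u" unfolding uh_def upd_def using uw(1) by auto
      qed
      moreover have "dif hn g \<subset> dif h g" unfolding hn_def
        using dif_upd[of h w u g True] uw by auto
      ultimately show ?thesis using M by metis
    next
      case nB: False
      define Y where "Y = {w \<in> X. \<exists>u. h u w}"
      define par where "par = (\<lambda>w. SOME u. h u w)"
      have parY: "w \<in> Y \<Longrightarrow> h (par w) w" for w
      proof -
        assume "w \<in> Y"
        then have "\<exists>u. h u w" unfolding Y_def by blast
        then show ?thesis unfolding par_def by (rule someI_ex)
      qed
      have unY: "w \<in> Y \<Longrightarrow> h i w \<Longrightarrow> i = par w" for w i
        using parY uhX unfolding Y_def uh_def by blast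
      have nhY: "w \<in> Y \<Longrightarrow> \<not> h w (par w)" for w using nA parY unfolding Y_def by blast
      have ngY: "w \<in> Y \<Longrightarrow> \<not> g (par w) w" for w using ngX parY unfolding Y_def by blast
      have gY: "w \<in> Y \<Longrightarrow> g w (par w)" for w using sk ngY parY unfolding SK_def by blast
      have parXY: "par w \<in> Y" if w: "w \<in> Y" for w
      proof -
        have "par w \<in> X" using gY[OF w] nhY[OF w] unfolding X_def by blast
        moreover have "\<exists>z. h z (par w)"
          using nB gY[OF w] parY[OF w] by blast
        ultimately show ?thesis unfolding Y_def by blast
      qed
      have inj: "inj_on par Y"
      proof (rule inj_onI)
        fix w1 w2 assume w12: "w1 \<in> Y" "w2 \<in> Y" "par w1 = par w2"
        have "par w1 \<in> X" using parXY[OF w12(1)] unfolding Y_def by blast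
        then have "uh g (par w1)" by (rule ugX)
        moreover have "g w1 (par w1)" "g w2 (par w1)" using gY[OF w12(1)] gY[OF w12(2)] w12(3) by simp_all
        ultimately show "w1 = w2" unfolding uh_def by blast
      qed
      have bij: "bij_betw par Y Y"
      proof -
        have "par ` Y \<subseteq> Y" using parXY by blast
        then have "par ` Y = Y" using endo_inj_surj[of Y par] inj by simp
        then show ?thesis unfolding bij_betw_def using inj by blast
      qed
      interpret c1: cyc h Y par
      proof
        show "bij_betw par Y Y" by (rule bij)
      qed (use parY nhY unY in blast)+
      define q where "q = inv_into Y par"
      have bq: "bij_betw q Y Y" unfolding q_def by (rule bij_betw_inv_into[OF bij])
      have pq: "v \<in> Y \<Longrightarrow> par (q v) = v" for v
        unfolding q_def using bij by (simp add: bij_betw_inv_into_right)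
      have qp: "v \<in> Y \<Longrightarrow> q (par v) = v" for v
        unfolding q_def using bij by (simp add: bij_betw_inv_into_left)
      have qY: "v \<in> Y \<Longrightarrow> q v \<in> Y" for v using bq bij_betwE by blast
      have hn_def: "c1.h' = (\<lambda>i x. if x \<in> Y then i \<in> Y \<and> par i = x else h i x)" by (rule c1.h'_def)
      have hnY: "x \<in> Y \<Longrightarrow> c1.h' i x \<longleftrightarrow> i \<in> Y \<and> par i = x" for i x by (simp add: hn_def)
      have hnN: "x \<notin> Y \<Longrightarrow> c1.h' i x \<longleftrightarrow> h i x" for i x by (simp add: hn_def)
      interpret c2: cyc "c1.h'" Y q
      proof
        show "bij_betw q Y Y" by (rule bq)
      next
        fix v assume "v \<in> Y" then show "c1.h' (q v) v" using qY pq hnY by blast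
      next
        fix v assume v: "v \<in> Y"
        show "\<not> c1.h' v (q v)"
        proof
          assume "c1.h' v (q v)"
          then have "par v = q v" using qY[OF v] hnY by blast
          then have "par (par v) = v" using pq[OF v] by simp
          then show False using c1.par_par[OF v] by simp
        qed
      next
        fix v i assume v: "v \<in> Y" and hi: "c1.h' i v"
        then have "i \<in> Y" "par i = v" using hnY by blast+
        then show "i = q v" using qp[of i] by simp
      qed
      have hY: "x \<in> Y \<Longrightarrow> h i x \<longleftrightarrow> i = par x" for x i using parY unY by blast
      have hback: "c2.h' = h"
      proof (intro ext)
        fix i x
        show "c2.h' i x = h i x"
        proof (cases "x \<in> Y")
          case True
          have "(i \<in> Y \<and> q i = x) \<longleftrightarrow> i = par x"
            using True pq qp c1.par_S by metis
          then show ?thesis using True hY[OF True] by (simp add: c2.h'_def)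
        next
          case False then show ?thesis using hnN[OF False] by (simp add: c2.h'_def)
        qed
      qed
      have M: "closure (Mh c1.h') = closure (Mh h)"
        using c1.model_closure c2.model_closure unfolding hback by blast
      have "irr c1.h'" unfolding irr_def
      proof
        fix i show "\<not> c1.h' i i"
          by (cases "i \<in> Y") (use hnY hnN c1.par_ne irh in \<open>auto simp: irr_def\<close>)
      qed
      moreover have "SK c1.h' h" unfolding SK_def
      proof (intro allI)
        fix i j
        show "(c1.h' i j \<or> c1.h' j i) = (h i j \<or> h j i)"
        proof (cases "j \<in> Y")
          case jY: True
          show ?thesis
          proof (cases "i \<in> Y")
            case True then show ?thesis using hnY hY jY by metis
          next
            case False then show ?thesis using hnY hnN hY jY c1.par_S by metis
          qed
        next
          case jN: False
          show ?thesis
          proof (cases "i \<in> Y")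
            case True then show ?thesis using hnY hnN hY jN c1.par_S by metis
          next
            case False then show ?thesis using hnN jN by metis
          qed
        qed
      qed
      moreover have "CO c1.h' h"
      proof (rule CO_local[of Y])
        show "uh c1.h' x" if "x \<in> Y" for x using that c1.par_inj hnY unfolding uh_def by metis
        show "uh h x" if "x \<in> Y" for x using that uhX unfolding Y_def by blast
        show "c1.h' i x = h i x" if "x \<notin> Y" for i x using hnN that by blast
      qed
      moreover have "dif c1.h' g \<subset> dif h g"
      proof -
        have gx: "g i x \<longleftrightarrow> (i \<in> Y \<and> par i = x)" if x: "x \<in> Y" for x i
        proof -
          have "uh g x" using x ugX unfolding Y_def by blast
          moreover have "g (q x) x" using gY[OF qY[OF x]] pq[OF x] by simp
          ultimately have "g i x \<longleftrightarrow> i = q x" unfolding uh_def by blast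
          also have "\<dots> \<longleftrightarrow> (i \<in> Y \<and> par i = x)" using x pq qp qY by metis
          finally show ?thesis .
        qed
        have eqY: "x \<in> Y \<Longrightarrow> c1.h' i x = g i x" for i x using gx hnY by blast
        have "dif c1.h' g \<subseteq> dif h g"
        proof
          fix z assume z: "z \<in> dif c1.h' g"
          obtain i x where zz: "z = (i,x)" by fastforce
          have "x \<notin> Y" using z zz eqY unfolding dif_def by auto
          then show "z \<in> dif h g" using z zz hnN unfolding dif_def by auto
        qed
        moreover have "v \<in> Y" using d hv unfolding Y_def X_def by blast
        then have "(u0, v) \<in> dif h g - dif c1.h' g" using eqY d unfolding dif_def by auto
        ultimately show ?thesis by blast
      qed
      ultimately show ?thesis using M by metis
    qed
  qed
qed



lemma main_ind:
  fixes n :: nat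
  shows "\<forall>h1 h2 :: 'n::finite \<Rightarrow> 'n \<Rightarrow> bool. irr h1 \<longrightarrow> irr h2 \<longrightarrow> SK h1 h2 \<longrightarrow> CO h1 h2 \<longrightarrow>
     card (dif h1 h2) = n \<longrightarrow> closure (Mh h1) = closure (Mh h2)"
proof (induction n rule: less_induct)
  case (less n)
  show ?case
  proof (intro allI impI)
    fix h1 h2 :: "'n \<Rightarrow> 'n \<Rightarrow> bool"
    assume i1: "irr h1" and i2: "irr h2" and sk: "SK h1 h2" and co: "CO h1 h2" and cn: "card (dif h1 h2) = n"
    show "closure (Mh h1) = closure (Mh h2)"
    proof (cases "dif h1 h2 = {}")
      case True
      then have "h1 = h2" unfolding dif_def by (auto intro!: ext)
      then show ?thesis by simp
    next
      case False
      then obtain u0 v where d: "h1 u0 v \<noteq> h2 u0 v" unfolding dif_def by auto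
      have fin: "finite (dif a b)" for a b :: "'n \<Rightarrow> 'n \<Rightarrow> bool" by simp
      show ?thesis
      proof (cases "\<exists>u. h1 u v")
        case True
        then obtain u1 where hv: "h1 u1 v" by blast
        obtain hn where hn: "irr hn" "SK hn h1" "CO hn h1" "closure (Mh hn) = closure (Mh h1)" "dif hn h2 \<subset> dif h1 h2"
          using step[OF i1 sk co d hv] by blast
        have lt: "card (dif hn h2) < n" using psubset_card_mono[OF fin hn(5)] cn by simp
        have "closure (Mh hn) = closure (Mh h2)"
          using less[rule_format, OF lt, of hn h2] hn(1) i2 SK_trans[OF hn(2) sk] CO_trans[OF hn(3) co] by blast
        then show ?thesis using hn(4) by simp
      next
        case False
        then have hv: "h2 u0 v" and d': "h2 u0 v \<noteq> h1 u0 v" using d by auto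
        obtain hn where hn: "irr hn" "SK hn h2" "CO hn h2" "closure (Mh hn) = closure (Mh h2)" "dif hn h1 \<subset> dif h2 h1"
          using step[OF i2 SK_sym[OF sk] CO_sym[OF co] d' hv] by blast
        have lt: "card (dif h1 hn) < n" using psubset_card_mono[OF fin hn(5)] cn dif_sym by metis
        have "closure (Mh h1) = closure (Mh hn)"
          using less[rule_format, OF lt, of h1 hn] hn(1) i1 SK_trans[OF sk SK_sym[OF hn(2)]]
            CO_trans[OF co CO_sym[OF hn(3)]] by blast
        then show ?thesis using hn(4) by simp
      qed
    qed
  qed
qed

lemma simple_DB:
  fixes D :: "('n \<times> 'n) set"
  assumes s: "simple_mixed_graph D B"
  shows "Dof (head_edge D B) = D" "Bof (head_edge D B) = B" "irr (head_edge D B)"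
proof -
  have m: "mixed_graph D B" using s unfolding simple_mixed_graph_def by blast
  have dne: "(i,j) \<in> D \<Longrightarrow> i \<noteq> j" for i j using m unfolding mixed_graph_def by blast
  have bf: "e \<in> B \<Longrightarrow> \<exists>i j. i \<noteq> j \<and> e = {i,j}" for e using m unfolding mixed_graph_def by blast
  have s1: "(i,j) \<in> D \<Longrightarrow> (j,i) \<notin> D" for i j using s dne unfolding simple_mixed_graph_def by blast
  have s2: "(i,j) \<in> D \<Longrightarrow> {i,j} \<notin> B" for i j using s dne unfolding simple_mixed_graph_def by blast
  have sing: "{i} \<notin> B" for i
  proof
    assume "{i} \<in> B"
    then obtain a b where ab: "a \<noteq> b" "{i} = {a,b}" using bf by blast
    then have "a \<in> {i}" "b \<in> {i}" by (metis insertI1, metis insertI1 insertI2)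
    then show False using ab(1) by simp
  qed
  show "irr (head_edge D B)" unfolding irr_def head_edge_def using dne sing by auto
  show "Dof (head_edge D B) = D"
  proof safe
    fix i v assume "(i,v) \<in> Dof (head_edge D B)"
    then have "head_edge D B i v" "\<not> head_edge D B v i" unfolding Dof_def by auto
    then show "(i,v) \<in> D" unfolding head_edge_def by (auto simp: insert_commute)
  next
    fix i v assume iv: "(i,v) \<in> D"
    have "(v,i) \<notin> D" "{v,i} \<notin> B" using s1[OF iv] s2[OF iv] by (auto simp: insert_commute)
    then show "(i,v) \<in> Dof (head_edge D B)" using iv unfolding Dof_def head_edge_def by auto
  qed
  show "Bof (head_edge D B) = B"
  proof safe
    fix e assume "e \<in> Bof (head_edge D B)"
    then obtain i v where e: "e = {i,v}" "head_edge D B i v" "head_edge D B v i" unfolding Bof_def by blast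
    show "e \<in> B"
    proof (rule ccontr)
      assume "e \<notin> B"
      then have "(i,v) \<in> D" "(v,i) \<in> D" using e unfolding head_edge_def by (auto simp: insert_commute)
      then show False using s1 by blast
    qed
  next
    fix e assume "e \<in> B"
    then obtain i j where "i \<noteq> j" "e = {i,j}" using bf by blast
    then show "e \<in> Bof (head_edge D B)" using \<open>e \<in> B\<close> unfolding Bof_def head_edge_def
      by (auto simp: insert_commute)
  qed
qed

lemma skel_iff: "{a,b} \<in> skeleton D B \<longleftrightarrow> head_edge D B a b \<or> head_edge D B b a"
proof -
  have 1: "{a,b} \<in> {{i,j} | i j. (i,j) \<in> D} \<longleftrightarrow> (a,b) \<in> D \<or> (b,a) \<in> D"
  proof
    assume "{a,b} \<in> {{i,j} | i j. (i,j) \<in> D}"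
    then obtain i j where "{a,b} = {i,j}" "(i,j) \<in> D" by blast
    then show "(a,b) \<in> D \<or> (b,a) \<in> D" unfolding doubleton_eq_iff by blast
  next
    assume "(a,b) \<in> D \<or> (b,a) \<in> D"
    moreover have "{b,a} = {a,b}" by (rule insert_commute)
    ultimately show "{a,b} \<in> {{i,j} | i j. (i,j) \<in> D}" by blast
  qed
  have 2: "{b,a} = {a,b}" by (rule insert_commute)
  show ?thesis unfolding skeleton_def head_edge_def Un_iff 1 2 by blast
qed

theorem theorem2:
  fixes D1 D2 :: "('n::finite \<times> 'n) set" and B1 B2 :: "'n set set"
  assumes "simple_mixed_graph D1 B1" and "simple_mixed_graph D2 B2"
    and "skeleton D1 B1 = skeleton D2 B2"
    and "colliders D1 B1 = colliders D2 B2"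
  shows "closure (model D1 B1) = closure (model D2 B2)"
proof -
  let ?h1 = "head_edge D1 B1" and ?h2 = "head_edge D2 B2"
  note s1 = simple_DB[OF assms(1)] and s2 = simple_DB[OF assms(2)]
  have sk: "SK ?h1 ?h2" unfolding SK_def
  proof (intro allI)
    fix i j show "(?h1 i j \<or> ?h1 j i) = (?h2 i j \<or> ?h2 j i)"
      using skel_iff[of i j D1 B1] skel_iff[of i j D2 B2] assms(3) by simp
  qed
  have co: "CO ?h1 ?h2" unfolding CO_def
  proof (intro allI impI)
    fix i j k :: 'n assume "i \<noteq> k"
    have "(i,j,k) \<in> colliders D1 B1 \<longleftrightarrow> (i,j,k) \<in> colliders D2 B2" using assms(4) by simp
    then show "(?h1 i j \<and> ?h1 k j) = (?h2 i j \<and> ?h2 k j)"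
      using \<open>i \<noteq> k\<close> unfolding colliders_def by simp
  qed
  have "closure (Mh ?h1) = closure (Mh ?h2)"
    using main_ind s1(3) s2(3) sk co by blast
  then show ?thesis unfolding Mh_def s1(1,2) s2(1,2) .
qed


end
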